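(* Let $\beta$ be a totally positive quadratic integer satisfying \[ \operatorname{Tr}\beta \leq \operatorname{Nm}\beta < 2\operatorname{Tr}\beta - 4. \] Then for every integer $n \geq 0$, $p_\beta\big((\operatorname{Tr}\beta)\beta^n\big) = n+1$.
   Context: A quadratic integer is a root of a monic irreducible quadratic polynomial in $\mathbb{Z}[x]$; it is totally positive if both it and its conjugate $\beta'$ are positive real numbers. $\operatorname{Tr}\beta = \beta + \beta'$ and $\operatorname{Nm}\beta = \beta\beta'$. For $\alpha \in \mathbb{C}$, $p_\beta(\alpha) \in \mathbb{Z}_{\geq 0}\cup\{\infty\}$ is the number of polynomials $f \in \mathbb{Z}_{\geq 0}[x]$ (non-negative integer coefficients) with $f(\beta) = \alpha$. *)

theory Defs
  imports Complex_Main "HOL-Computational_Algebra.Polynomial" "HOL-Library.Extended_Nat"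
begin

definition quad_min_poly :: "complex \<Rightarrow> int poly \<Rightarrow> bool" where
  "quad_min_poly \<beta> p \<longleftrightarrow> degree p = 2 \<and> lead_coeff p = 1 \<and> irreducible p
      \<and> poly (map_poly of_int p) \<beta> = 0"

text \<open>For p = x^2 + b x + c: trace = beta + beta' = -b, norm = beta * beta' = c.\<close>
definition quad_tr :: "int poly \<Rightarrow> int" where
  "quad_tr p = - coeff p 1"

definition quad_nm :: "int poly \<Rightarrow> int" where
  "quad_nm p = coeff p 0"

definition quad_conj :: "int poly \<Rightarrow> complex \<Rightarrow> complex" where
  "quad_conj p \<beta> = of_int (quad_tr p) - \<beta>"

definition totally_positive :: "int poly \<Rightarrow> complex \<Rightarrow> bool" where
  "totally_positive p \<beta> \<longleftrightarrow> \<beta> \<in> \<real> \<and> Re \<beta> > 0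
      \<and> quad_conj p \<beta> \<in> \<real> \<and> Re (quad_conj p \<beta>) > 0"

definition rep_count :: "complex \<Rightarrow> complex \<Rightarrow> enat" where
  "rep_count \<beta> \<alpha> =
     (let S = {f :: nat poly. poly (map_poly of_nat f) \<beta> = \<alpha>}
      in if finite S then enat (card S) else \<infinity>)"

end

theory Submission
  imports Defs
begin


lemma main_seq:
  fixes Q c :: "nat \<Rightarrow> int" and t m :: int and B b :: real and n N :: nat
  assumes QN: "\<And>k. k \<ge> N \<Longrightarrow> Q k = 0"
  and cnn: "\<And>k. c k \<ge> 0"
  and crel: "\<And>k. c k = (if k = n then t else 0) + m * Q k - t * (if k \<ge> 1 then Q (k-1) else 0) + (if k \<ge> 2 then Q (k-2) else 0)"
  and Bb1: "B + b = t" and Bb2: "B * b = m" and b0: "0 < b" and b2: "b < 2" and B0: "0 < B"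
  and BB: "B * (B - b) > t" and tB: "t < 2 * B" and t0: "0 < t"
  shows "\<exists>j\<le>n. \<forall>k. Q k = (if n - j \<le> k \<and> k < n then 1 else 0)"
proof -
  define P where "P k = (if k = 0 then 0 else real_of_int (Q (k-1)))" for k
  define h where "h k = P k - b * Q k" for k
  define h' where "h' k = P k - B * Q k" for k
  have mQ: "B * b * Q k = m * Q k" for k using Bb2 by simp
  have tQ: "(B + b) * Q k = t * Q k" for k using Bb1 by simp
  have rec1: "h k - B * h (Suc k) = c (Suc k) - (if Suc k = n then t else 0)" for k
  proof -
    have "real_of_int (c (Suc k)) = (if Suc k = n then t else 0) + m * Q (Suc k) - t * Q k + (if k \<ge> 1 then Q (k-1) else 0)"
      using crel[of "Suc k"] by simp
    moreover have "h k - B * h (Suc k) = P k - (B + b) * Q k + B * b * Q (Suc k)"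
      unfolding h_def P_def by (simp add: algebra_simps)
    ultimately show ?thesis using mQ[of "Suc k"] tQ[of k] unfolding P_def by auto
  qed
  have rec1': "h' k - b * h' (Suc k) = c (Suc k) - (if Suc k = n then t else 0)" for k
  proof -
    have "real_of_int (c (Suc k)) = (if Suc k = n then t else 0) + m * Q (Suc k) - t * Q k + (if k \<ge> 1 then Q (k-1) else 0)"
      using crel[of "Suc k"] by simp
    moreover have "h' k - b * h' (Suc k) = P k - (B + b) * Q k + B * b * Q (Suc k)"
      unfolding h'_def P_def by (simp add: algebra_simps)
    ultimately show ?thesis using mQ[of "Suc k"] tQ[of k] unfolding P_def by auto
  qed
  have rec0: "- B * h 0 = c 0 - (if 0 = n then t else 0)"
    using crel[of 0] mQ[of 0] unfolding h_def P_def by (auto simp: algebra_simps)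
  have rec0': "- b * h' 0 = c 0 - (if 0 = n then t else 0)"
    using crel[of 0] mQ[of 0] unfolding h'_def P_def by (auto simp: algebra_simps)
  have L: "k < n \<Longrightarrow> h k \<le> 0" for k
  proof (induction k)
    case 0
    then have "- B * h 0 \<ge> 0" using rec0 cnn[of 0] by simp
    then show ?case using B0 by (simp add: mult_le_0_iff)
  next
    case (Suc k)
    then have "h k \<le> 0" by simp
    moreover have "h k - B * h (Suc k) \<ge> 0" using rec1[of k] cnn[of "Suc k"] Suc.prems by simp
    ultimately have "B * h (Suc k) \<le> 0" by linarith
    then show ?case using B0 by (simp add: mult_le_0_iff)
  qed
  have U: "n \<le> k \<Longrightarrow> h' k \<ge> 0" for k
  proof (induction "N + 1 - k" arbitrary: k)
    case 0
    then have "k \<ge> N + 1" by simp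
    then show ?case unfolding h'_def P_def using QN by simp
  next
    case (Suc d)
    then have "h' (Suc k) \<ge> 0" by simp
    moreover have "h' k - b * h' (Suc k) \<ge> 0" using rec1'[of k] cnn[of "Suc k"] Suc.prems by simp
    ultimately show ?case using b0 by (smt (verit) mult_nonneg_nonneg)
  qed
  have T: "B * h n \<le> t"
  proof (cases n)
    case 0
    then show ?thesis using rec0 cnn[of 0] by simp
  next
    case (Suc n')
    then have "h n' \<le> 0" using L by simp
    then show ?thesis using rec1[of n'] cnn[of n] Suc by simp
  qed
  have hS: "h' (Suc k) = Q k - B * Q (Suc k)" for k unfolding h'_def P_def by simp
  have Qge: "n \<le> k \<Longrightarrow> Q k \<ge> 0" for k
  proof (induction "N - k" arbitrary: k)
    case 0
    then show ?case using QN by simp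
  next
    case (Suc d)
    then have "Q (Suc k) \<ge> 0" by simp
    moreover have "h' (Suc k) \<ge> 0" using U Suc.prems by simp
    ultimately have "real_of_int (Q k) \<ge> 0" using hS[of k] B0
      by (smt (verit) mult_nonneg_nonneg of_int_0_le_iff)
    then show ?case by simp
  qed
  have Qn: "Q n = 0"
  proof (cases n)
    case 0
    have "h' 0 \<ge> 0" using U 0 by simp
    then have "real_of_int (Q 0) \<le> 0" unfolding h'_def P_def using B0
      by (simp add: mult_le_0_iff)
    then show ?thesis using Qge[of 0] 0 by simp
  next
    case (Suc n')
    have a: "Q n' \<ge> B * Q n" using U[of n] hS[of n'] Suc by simp
    have b: "B * (Q n' - b * Q n) \<le> t" using T Suc unfolding h_def P_def by simp
    have "Q n \<ge> 0" using Qge by simp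
    show ?thesis
    proof (rule ccontr)
      assume "Q n \<noteq> 0"
      then have q1: "real_of_int (Q n) \<ge> 1" using \<open>Q n \<ge> 0\<close> by simp
      have "B * (B - b) * Q n \<le> B * (Q n' - b * Q n)"
        using a B0 by (simp add: algebra_simps)
      moreover have "B * (B - b) * 1 \<le> B * (B - b) * Q n"
        apply (rule mult_left_mono[OF q1]) using BB t0 by linarith
      ultimately show False using b BB by linarith
    qed
  qed
  have Qz: "n \<le> k \<Longrightarrow> Q k = 0" for k
  proof (induction k rule: dec_induct)
    case base then show ?case using Qn .
  next
    case (step k)
    have "h' (Suc k) \<ge> 0" using U step by simp
    then have "real_of_int (Q (Suc k)) \<le> 0" using hS[of k] step.IH B0
      by (simp add: mult_le_0_iff)
    moreover have "Q (Suc k) \<ge> 0" using Qge step by simp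
    ultimately show ?case by simp
  qed
  have Lk: "k < n \<Longrightarrow> P k \<le> b * Q k" for k using L[of k] unfolding h_def by simp
  have nonneg: "k < n \<Longrightarrow> Q k \<ge> 0" for k
  proof (induction k)
    case 0
    then have "0 \<le> b * Q 0" using Lk[of 0] unfolding P_def by simp
    then show ?case using b0 by (simp add: zero_le_mult_iff)
  next
    case (Suc k)
    then have "0 \<le> b * Q (Suc k)" using Lk[of "Suc k"] unfolding P_def by simp
    then show ?case using b0 by (simp add: zero_le_mult_iff)
  qed
  have le1: "k < n \<Longrightarrow> Q k \<le> 1" for k
  proof (induction "n - k" arbitrary: k)
    case 0 then show ?case by simp
  next
    case (Suc d)
    show ?case
    proof (cases "Suc k = n")
      case True
      then have "h n = Q k" using Qn unfolding h_def P_def by (cases n) auto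
      then have "B * Q k < 2 * B" using T tB by simp
      then have "real_of_int (Q k) < 2" using B0 by simp
      then show ?thesis by simp
    next
      case False
      then have sk: "Suc k < n" using Suc.prems by simp
      then have "Q (Suc k) \<le> 1" using Suc by simp
      moreover have le: "real_of_int (Q k) \<le> b * Q (Suc k)" using Lk[of "Suc k"] sk unfolding P_def by simp
      moreover have "b * Q (Suc k) \<le> b * 1" 
        apply (rule mult_left_mono) using calculation b0 by simp_all
      ultimately have "real_of_int (Q k) < 2" using b2 by linarith
      then show ?thesis by simp
    qed
  qed
  have mono: "Q k \<le> Q (Suc k)" if "Suc k < n" for k
  proof -
    have le: "real_of_int (Q k) \<le> b * Q (Suc k)" using Lk[of "Suc k"] that unfolding P_def by simp
    have "Q (Suc k) = 0 \<or> Q (Suc k) = 1" using nonneg[of "Suc k"] le1[of "Suc k"] that by auto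
    then show ?thesis
    proof
      assume "Q (Suc k) = 0" then show ?thesis using le by simp
    next
      assume a: "Q (Suc k) = 1"
      then have "real_of_int (Q k) < 2" using le b2 by simp
      then show ?thesis using a by simp
    qed
  qed
  define s where "s = (LEAST k. k = n \<or> Q k = 1)"
  have sn: "s \<le> n" unfolding s_def by (rule Least_le) simp
  have below: "Q k = 0" if "k < s" for k
  proof -
    have "\<not> (k = n \<or> Q k = 1)" using not_less_Least[of k "\<lambda>k. k = n \<or> Q k = 1"] that s_def by simp
    then show ?thesis using nonneg[of k] le1[of k] that sn by auto
  qed
  have above: "Q k = 1" if "s \<le> k" "k < n" for k
  proof -
    have "s = n \<or> Q s = 1" unfolding s_def by (rule LeastI[of _ n]) simp
    then have Qs: "Q s = 1" using that by auto
    have "Q s \<le> Q k" using that(1,2)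
    proof (induction k rule: dec_induct)
      case base then show ?case by simp
    next
      case (step k) then show ?case using mono[of k] by simp
    qed
    then show ?thesis using Qs le1[of k] that by simp
  qed
  show ?thesis
  proof (intro exI[of _ "n - s"] conjI allI)
    show "n - s \<le> n" by simp
    fix k
    show "Q k = (if n - (n - s) \<le> k \<and> k < n then 1 else 0)"
      using below[of k] above[of k] Qz[of k] sn by auto
  qed
qed



lemma mp_add: "map_poly (of_int::int\<Rightarrow>'a::comm_ring_1) (x + y) = map_poly of_int x + map_poly of_int y"
  by (rule poly_eqI) (simp add: coeff_map_poly)

lemma mp_diff: "map_poly (of_int::int\<Rightarrow>'a::comm_ring_1) (x - y) = map_poly of_int x - map_poly of_int y"
  by (rule poly_eqI) (simp add: coeff_map_poly)

lemma poly_mp_mult: "poly (map_poly (of_int::int\<Rightarrow>'a::comm_ring_1) (x * y)) z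
   = poly (map_poly of_int x) z * poly (map_poly of_int y) z"
proof (induction x)
  case 0 then show ?case by simp
next
  case (pCons a x)
  have "map_poly (of_int::int\<Rightarrow>'a) (pCons a x * y) = smult (of_int a) (map_poly of_int y) + pCons 0 (map_poly of_int (x * y))"
    by (simp add: mp_add map_poly_smult map_poly_pCons)
  then show ?case using pCons by (simp add: map_poly_pCons algebra_simps)
qed

lemma poly_mp_monom: "poly (map_poly (of_int::int\<Rightarrow>'a::comm_ring_1) (monom c n)) z = of_int c * z ^ n"
  by (simp add: map_poly_monom poly_monom)

lemma coeff_mult_quad: fixes a b :: int and s :: "int poly" shows "coeff ([:a, b, 1:] * s) k = a * coeff s k + (if k \<ge> 1 then b * coeff s (k-1) else 0)
   + (if k \<ge> 2 then coeff s (k-2) else 0)"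
  by (cases k; cases "k - 1") (auto simp: mult_pCons_left coeff_pCons algebra_simps split: nat.splits)

lemma no_int_root:
  fixes T M k :: int
  assumes "T \<le> M" "M < 2*T - 4"
  shows "k^2 - T*k + M \<noteq> 0"
proof
  assume e: "k^2 - T*k + M = 0"
  then have Mk: "M = k * (T - k)" by (simp add: power2_eq_square algebra_simps)
  have T5: "T \<ge> 5" using assms by simp
  consider "k \<le> 0" | "k = 1" | "k = 2" | "3 \<le> k \<and> k \<le> T - 3" | "k = T - 2" | "k = T - 1" | "k \<ge> T" by linarith
  then show False
  proof cases
    case 1 then have "k * (T - k) \<le> 0" using T5 by (simp add: mult_nonpos_nonneg)
    then show ?thesis using Mk assms by simp
  next
    case 2 then show ?thesis using Mk assms by simp
  next
    case 3 then show ?thesis using Mk assms by simp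
  next
    case 4
    then have "(k - 3) * (T - 3 - k) \<ge> 0" by simp
    then have "k * (T - k) \<ge> 3 * T - 9" by (simp add: algebra_simps)
    then show ?thesis using Mk assms T5 by simp
  next
    case 5 then have "T - k = 2" by simp
    then show ?thesis using Mk assms 5 by simp
  next
    case 6 then have "T - k = 1" by simp
    then show ?thesis using Mk assms 6 by simp
  next
    case 7 then have "k * (T - k) \<le> 0" using T5 by (simp add: mult_nonneg_nonpos)
    then show ?thesis using Mk assms by simp
  qed
qed

lemma no_form_zero:
  fixes T M x y :: int
  assumes "T \<le> M" "M < 2*T - 4" "y \<noteq> 0"
  shows "x^2 + T*x*y + M*y^2 \<noteq> 0"
proof
  assume e: "x^2 + T*x*y + M*y^2 = 0"
  define g where "g = gcd x y"
  have g0: "g \<noteq> 0" using assms(3) g_def by simp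
  obtain a b where ab: "x = a * g" "y = b * g" "coprime a b"
    using gcd_coprime_exists[of x y] g0 g_def by blast
  have "g^2 * (a^2 + T*a*b + M*b^2) = 0" using e ab by (simp add: power2_eq_square algebra_simps)
  then have e2: "a^2 + T*a*b + M*b^2 = 0" using g0 by simp
  have "b dvd a^2"
  proof
    show "a^2 = b * (- (T*a + M*b))" using e2 by (simp add: power2_eq_square algebra_simps)
  qed
  moreover have "coprime (a^2) b" using ab by simp
  ultimately have "\<bar>b\<bar> = 1" using coprime_common_divisor_int[of "a^2" b b] by simp
  then consider "b = 1" | "b = -1" by linarith
  then show False
  proof cases
    case 1
    then have "(-a)^2 - T*(-a) + M = 0" using e2 by (simp add: power2_eq_square)
    then show ?thesis using no_int_root[OF assms(1,2)] by blast
  next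
    case 2
    then have "a^2 - T*a + M = 0" using e2 by (simp add: power2_eq_square)
    then show ?thesis using no_int_root[OF assms(1,2)] by blast
  qed
qed


theorem theorem2:
  fixes \<beta> :: complex and p :: "int poly"
  assumes "quad_min_poly \<beta> p"
    and "totally_positive p \<beta>"
    and "quad_tr p \<le> quad_nm p"
    and "quad_nm p < 2 * quad_tr p - 4"
  shows "\<forall>n::nat. rep_count \<beta> (of_int (quad_tr p) * \<beta> ^ n) = enat (n + 1)"
proof
  fix n :: nat
  define T where "T = quad_tr p"
  define M where "M = quad_nm p"
  have dp: "degree p = 2" and lp: "coeff p 2 = 1" and root: "poly (map_poly of_int p) \<beta> = 0"
    using assms(1) unfolding quad_min_poly_def by auto
  have TM: "T \<le> M" "M < 2*T - 4" using assms(3,4) T_def M_def by auto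
  have T5: "T \<ge> 5" using TM by simp
  have pe: "p = [:M, -T, 1:]"
  proof (rule poly_eqI)
    fix k :: nat
    consider "k = 0" | "k = 1" | "k = 2" | "k \<ge> 3" by linarith
    then show "coeff p k = coeff [:M, -T, 1:] k"
    proof cases
      case 4
      obtain k' where "k = 3 + k'" using le_Suc_ex[OF 4] by blast
      then have k': "k = Suc (Suc (Suc k'))" by simp
      have "coeff p k = 0" using dp 4 by (intro coeff_eq_0) simp
      then show ?thesis using k' by simp
    qed (auto simp: M_def T_def quad_nm_def quad_tr_def lp[unfolded numeral_2_eq_2] numeral_2_eq_2)
  qed
  have p0: "p \<noteq> 0" using dp by auto
  have rootq: "\<beta>^2 - of_int T * \<beta> + of_int M = 0"
    using root unfolding pe by (simp add: map_poly_pCons power2_eq_square algebra_simps)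
  define D where "D = T^2 - 4*M"
  define sd where "sd = sqrt (real_of_int D)"
  define B where "B = (T + sd) / 2"
  define b where "b = (T - sd) / 2"
  have D4: "D \<ge> (T - 4)^2 + 4" using TM unfolding D_def by (simp add: power2_eq_square algebra_simps)
  have "(T - 4)^2 \<ge> 0" by simp
  then have Dpos: "D > 0" using D4 by linarith
  have sd2: "sd^2 = D" unfolding sd_def using Dpos by simp
  have sd0: "sd > 0" unfolding sd_def using Dpos by simp
  have sdl: "sd > T - 4"
  proof -
    have "real_of_int ((T - 4)^2) < real_of_int D" using D4 by linarith
    then have "(real_of_int T - 4)^2 < real_of_int D" by simp
    then have "real_of_int T - 4 < sqrt (real_of_int D)" by (rule real_less_rsqrt)
    then show ?thesis unfolding sd_def by simp
  qed
  have sdu: "sd < T"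
  proof -
    have "D < T^2" using TM unfolding D_def by simp
    then have "real_of_int D < real_of_int (T^2)" by (simp only: of_int_less_iff)
    then have "sd^2 < (real_of_int T)^2" using sd2 by simp
    moreover have "real_of_int T \<ge> 0" using T5 by simp
    ultimately show ?thesis by (rule power_less_imp_less_base)
  qed
  have Bb1: "B + b = T" unfolding B_def b_def by (simp add: field_simps)
  have Bb2: "B * b = M"
  proof -
    have "B * b = (T^2 - sd^2) / 4" unfolding B_def b_def by (simp add: power2_eq_square field_simps)
    also have "\<dots> = M" using sd2 unfolding D_def by simp
    finally show ?thesis .
  qed
  have b0: "0 < b" using sdu unfolding b_def by simp
  have b2: "b < 2" using sdl unfolding b_def by simp
  have B0: "0 < B" using T5 sd0 unfolding B_def by simp
  have tB: "T < 2 * B" using sd0 unfolding B_def by simp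
  have BB: "B * (B - b) > T"
  proof -
    have e: "B * (B - b) = (T * sd + sd^2) / 2" unfolding B_def b_def by (simp add: power2_eq_square field_simps)
    have f1: "of_int T * sd > (of_int T::real) * (of_int T - 4)" using sdl T5 by simp
    have f2: "sd^2 \<ge> (of_int T - 4)^2 + 4"
    proof -
      have "real_of_int ((T - 4)^2 + 4) \<le> real_of_int D" using D4 by (simp only: of_int_le_iff)
      then show ?thesis using sd2 by simp
    qed
    have "(T - 2) * (T - 5) \<ge> 0" using T5 by simp
    moreover have "T * (T - 4) + ((T - 4)^2 + 4) - 2 * T = 2 * ((T - 2) * (T - 5))"
      by (simp add: power2_eq_square algebra_simps)
    ultimately have "T * (T - 4) + ((T - 4)^2 + 4) \<ge> 2 * T" by linarith
    then have "real_of_int (T * (T - 4) + ((T - 4)^2 + 4)) \<ge> real_of_int (2 * T)" by (simp only: of_int_le_iff)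
    then have f3: "(of_int T::real) * (of_int T - 4) + ((of_int T - 4)^2 + 4) \<ge> 2 * of_int T" by simp
    have gen: "\<And>X Y A C E t :: real. A < X \<Longrightarrow> C \<le> Y \<Longrightarrow> 2 * t \<le> A + C \<Longrightarrow> 2 * E = X + Y \<Longrightarrow> t < E"
      by linarith
    have e2: "2 * (B * (B - b)) = of_int T * sd + sd^2" using e by simp
    show ?thesis by (rule gen[OF f1 f2 f3 e2])
  qed
  define Sj where "Sj j = (\<Sum>i\<in>{n-j..<n}. monom (1::int) i)" for j
  define Fj where "Fj j = monom T n + p * Sj j" for j
  define phi where "phi j = map_poly nat (Fj j)" for j
  have coeffS: "coeff (Sj j) k = (if n - j \<le> k \<and> k < n then 1 else 0)" for j k
    unfolding Sj_def by (simp add: coeff_sum coeff_monom)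
  have coeffF: "coeff (Fj j) k = (if k = n then T else 0) + M * coeff (Sj j) k
     + (if k \<ge> 1 then (-T) * coeff (Sj j) (k-1) else 0) + (if k \<ge> 2 then coeff (Sj j) (k-2) else 0)" for j k
    unfolding Fj_def pe coeff_add coeff_mult_quad by (simp add: coeff_monom)
  have Fnn: "coeff (Fj j) k \<ge> 0" if "j \<le> n" for j k
  proof -
    define a where "a = coeff (Sj j) k"
    define a1 where "a1 = (if k \<ge> 1 then coeff (Sj j) (k-1) else 0)"
    define a2 where "a2 = (if k \<ge> 2 then coeff (Sj j) (k-2) else 0)"
    have e: "coeff (Fj j) k = (if k = n then T else 0) + M * a - T * a1 + a2"
      unfolding coeffF a_def a1_def a2_def by simp
    have "a \<in> {0,1}" "a1 \<in> {0,1}" "a2 \<in> {0,1}" unfolding a_def a1_def a2_def coeffS by auto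
    moreover have "a1 = 1 \<Longrightarrow> k \<noteq> n \<Longrightarrow> a = 1" unfolding a_def a1_def coeffS
      by (auto split: if_splits)
    ultimately show ?thesis unfolding e using TM T5 by (cases "k = n") auto
  qed
  have mapback: "map_poly int (phi j) = Fj j" if "j \<le> n" for j
    by (rule poly_eqI) (simp add: phi_def coeff_map_poly Fnn[OF that])
  have ofnat_int: "map_poly (of_nat :: nat \<Rightarrow> complex) f = map_poly of_int (map_poly int f)" for f
    by (rule poly_eqI) (simp add: coeff_map_poly)
  have evalphi: "poly (map_poly of_nat (phi j)) \<beta> = of_int T * \<beta>^n" if "j \<le> n" for j
    unfolding ofnat_int mapback[OF that] Fj_def mp_add
    by (simp add: poly_mp_mult poly_mp_monom root del: of_int_poly)
  have Sinj: "Sj i \<noteq> Sj j" if "i < j" "j \<le> n" for i j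
  proof
    assume "Sj i = Sj j"
    then have "coeff (Sj i) (n - j) = coeff (Sj j) (n - j)" by simp
    then show False using that unfolding coeffS by (auto split: if_splits)
  qed
  have inj: "inj_on phi {0..n}"
  proof (rule inj_onI)
    fix i j assume ij: "i \<in> {0..n}" "j \<in> {0..n}" "phi i = phi j"
    then have "Fj i = Fj j" using mapback by (metis atLeastAtMost_iff)
    then have "Sj i = Sj j" unfolding Fj_def using p0 by simp
    then show "i = j" using Sinj ij by (metis atLeastAtMost_iff linorder_neqE_nat)
  qed
  have Seq: "{f :: nat poly. poly (map_poly of_nat f) \<beta> = of_int T * \<beta>^n} = phi ` {0..n}"
  proof
    show "phi ` {0..n} \<subseteq> {f. poly (map_poly of_nat f) \<beta> = of_int T * \<beta> ^ n}"
      using evalphi by auto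
  next
    show "{f. poly (map_poly of_nat f) \<beta> = of_int T * \<beta> ^ n} \<subseteq> phi ` {0..n}"
    proof
      fix f :: "nat poly"
      assume "f \<in> {f. poly (map_poly of_nat f) \<beta> = of_int T * \<beta> ^ n}"
      then have ef: "poly (map_poly of_nat f) \<beta> = of_int T * \<beta> ^ n" by simp
      define g where "g = map_poly int f - monom T n"
      have eg: "poly (map_poly of_int g) \<beta> = 0"
        using ef unfolding g_def mp_diff ofnat_int by (simp add: poly_mp_monom del: of_int_poly)
      obtain q r where qr: "pseudo_divmod g p = (q, r)" by (metis surj_pair)
      have "smult (coeff p (degree p) ^ (Suc (degree g) - degree p)) g = p * q + r"
        using pseudo_divmod(1)[OF p0 qr] .
      then have gqr: "g = p * q + r" using dp lp by simp
      have rdeg: "r = 0 \<or> degree r < degree p" using pseudo_divmod(2)[OF p0 qr] .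
      have rform: "r = [:coeff r 0, coeff r 1:]"
      proof (rule poly_eqI)
        fix k
        show "coeff r k = coeff [:coeff r 0, coeff r 1:] k"
        proof (cases "k \<ge> 2")
          case True
          then have "coeff r k = 0" using rdeg dp coeff_eq_0[of r k] by auto
          moreover obtain k' where "k = 2 + k'" using le_Suc_ex[OF True] by blast
          then have "k = Suc (Suc k')" by simp
          ultimately show ?thesis by simp
        next
          case False
          then consider "k = 0" | "k = 1" by linarith
          then show ?thesis by cases simp_all
        qed
      qed
      define r0 where "r0 = coeff r 0"
      define r1 where "r1 = coeff r 1"
      have "poly (map_poly of_int r) \<beta> = 0"
        using eg root unfolding gqr mp_add by (simp add: poly_mp_mult del: of_int_poly)
      then have lin: "of_int r0 + of_int r1 * \<beta> = 0"
        by (subst (asm) rform) (simp add: map_poly_pCons r0_def r1_def mult.commute del: of_int_poly)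
      have r1z: "r1 = 0"
      proof (rule ccontr)
        assume nz: "r1 \<noteq> 0"
        have x: "(of_int r0 :: complex) = - of_int r1 * \<beta>" using lin by (simp add: eq_neg_iff_add_eq_0)
        have "(of_int (r0^2 + T*r0*r1 + M*r1^2) :: complex) = of_int r1 ^ 2 * (\<beta>^2 - of_int T * \<beta> + of_int M)"
          unfolding of_int_add of_int_mult of_int_power x by (simp add: power2_eq_square algebra_simps)
        then have "(of_int (r0^2 + T*r0*r1 + M*r1^2) :: complex) = 0" using rootq by simp
        then have "r0^2 + T*r0*r1 + M*r1^2 = 0" by (simp only: of_int_eq_0_iff)
        then show False using no_form_zero[OF TM nz] by simp
      qed
      then have "r0 = 0" using lin by simp
      then have r0': "r = 0" using r1z rform unfolding r0_def r1_def by simp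
      have fq: "map_poly int f = monom T n + p * q" using gqr r0' unfolding g_def by (simp add: algebra_simps)
      have crel: "int (coeff f k) = (if k = n then T else 0) + M * coeff q k - T * (if k \<ge> 1 then coeff q (k-1) else 0) + (if k \<ge> 2 then coeff q (k-2) else 0)" for k
      proof -
        have "int (coeff f k) = coeff (map_poly int f) k" by (simp add: coeff_map_poly)
        also have "\<dots> = (if k = n then T else 0) + (M * coeff q k + (if k \<ge> 1 then (-T) * coeff q (k-1) else 0) + (if k \<ge> 2 then coeff q (k-2) else 0))"
          unfolding fq pe coeff_add coeff_mult_quad by (simp add: coeff_monom)
        finally show ?thesis by auto
      qed
      have QN: "\<And>k. Suc (degree q) \<le> k \<Longrightarrow> coeff q k = 0" by (simp add: coeff_eq_0)
      have cnn: "\<And>k. int (coeff f k) \<ge> 0" by simp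
      have t0: "0 < T" using T5 by simp
      from main_seq[of "Suc (degree q)" "coeff q" "\<lambda>k. int (coeff f k)" n T M B b,
            OF QN cnn crel Bb1 Bb2 b0 b2 B0 BB tB t0]
      obtain j where j: "j \<le> n" "\<And>k. coeff q k = (if n - j \<le> k \<and> k < n then 1 else 0)"
        by blast
      have "q = Sj j" by (rule poly_eqI) (simp add: j(2) coeffS)
      then have "map_poly int f = Fj j" using fq Fj_def by simp
      moreover have "map_poly nat (map_poly int f) = f" by (rule poly_eqI) (simp add: coeff_map_poly)
      ultimately have "f = phi j" unfolding phi_def by simp
      then show "f \<in> phi ` {0..n}" using j(1) by simp
    qed
  qed
  show "rep_count \<beta> (of_int (quad_tr p) * \<beta> ^ n) = enat (n + 1)"
    unfolding rep_count_def Let_def T_def[symmetric] Seq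
    using card_image[OF inj] by simp
qed

end
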